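(* Let $X\subseteq\mathbb{R}^n$ be nonempty, compact and convex; $F:X\to\mathbb{R}^n$ $L_F$-Lipschitz continuous and monotone on $X$; $f:X\to\mathbb{R}$ real-valued, possibly nonconvex, and $L$-smooth on $X$; and $\mathrm{VI}(X,F)$ $\alpha$-weakly sharp of order $\mathcal{M}\ge1$. Let $\{\hat x_k\}$ be generated by the IPR-EG method described in the context, with outer stepsize $\hat\gamma\le\frac1{2L}$. Then for all $k\ge0$, $\|G_{1/\hat\gamma}(\hat x_k)\|^2\le\frac4{\hat\gamma}(f(\hat x_k)-f(\hat x_{k+1}))+L\hat\gamma C_f^2+\frac{80}{L\hat\gamma^3}(\|\delta_k\|^2+\|e_k\|^2)$.
   Context: $X^*_F=\mathrm{SOL}(X,F)=\{x\in X: F(x)^\top(y-x)\ge0\ \forall y\in X\}$, $\Pi_Y$ Euclidean projection, $\mathrm{dist}(x,Y)=\|x-\Pi_Y[x]\|$. Weak sharpness of order $\mathcal{M}$: $F(x^* )^\top(x-x^* )\ge\alpha\,\mathrm{dist}^{\mathcal{M}}(x,X^*_F)$ for all $x\in X$, $x^*\in X^*_F$, with $\alpha>0$. $C_f=\sup_{x\in X}\|\nabla f(x)\|$. Residual mapping: $G_{1/\hat\gamma}(x)=\frac1{\hat\gamma}(x-\Pi_{X^*_F}[x-\hat\gamma\nabla f(x)])$. IPR-EG: given $\hat x_0\in X$, outer stepsize $\hat\gamma$, inner stepsize $\gamma>0$, regularization $\eta_k>0$, inner counts $T_k$; at outer iteration $k$ set $z_k=\hat x_k-\hat\gamma\nabla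 f(\hat x_k)$ and run $T_k$ steps of $y_{k,t+1}=\Pi_X[x_{k,t}-\gamma(F(x_{k,t})+\eta_k(x_{k,t}-z_k))]$, $x_{k,t+1}=\Pi_X[x_{k,t}-\gamma(F(y_{k,t+1})+\eta_k(y_{k,t+1}-z_k))]$, $\bar y_{k,t+1}=(\Gamma_{k,t}\bar y_{k,t}+\theta_{k,t}y_{k,t+1})/\Gamma_{k,t+1}$, $\Gamma_{k,0}=0$, $\Gamma_{k,t+1}=\Gamma_{k,t}+\theta_{k,t}$, $\theta_{k,0}=\frac1{1-0.5\gamma\eta_k}$, $\theta_{k,t+1}=\frac{\theta_{k,t}}{1-0.5\gamma\eta_k}$; then $\hat x_{k+1}=\bar y_{k,T_k}$, $x_{k+1,0}=\bar y_{k+1,0}=\bar y_{k,T_k}$ ($x_{0,0},\bar y_{0,0}\in X$ given). Errors: $\delta_k=\hat x_{k+1}-\Pi_{X^*_F}[z_k]$, $e_k=\hat x_k-\Pi_{X^*_F}[\hat x_k]$. *)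

theory Defs
  imports "HOL-Analysis.Analysis"
begin

definition SOL :: "('a::euclidean_space) set \<Rightarrow> ('a \<Rightarrow> 'a) \<Rightarrow> 'a set" where
  "SOL X F = {x \<in> X. \<forall>y\<in>X. F x \<bullet> (y - x) \<ge> 0}"

abbreviation proj :: "('a::euclidean_space) set \<Rightarrow> 'a \<Rightarrow> 'a" where
  "proj Y x \<equiv> closest_point Y x"

definition dist_set :: "('a::euclidean_space) \<Rightarrow> 'a set \<Rightarrow> real" where
  "dist_set x Y = norm (x - proj Y x)"

definition monotone_op_on :: "('a::euclidean_space) set \<Rightarrow> ('a \<Rightarrow> 'a) \<Rightarrow> bool" where
  "monotone_op_on X F \<longleftrightarrow> (\<forall>x\<in>X. \<forall>y\<in>X. (F x - F y) \<bullet> (x - y) \<ge> 0)"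

definition weakly_sharp :: "('a::euclidean_space) set \<Rightarrow> ('a \<Rightarrow> 'a) \<Rightarrow> real \<Rightarrow> real \<Rightarrow> bool" where
  "weakly_sharp X F \<alpha> M \<longleftrightarrow> \<alpha> > 0 \<and>
     (\<forall>x\<in>X. \<forall>xs\<in>SOL X F. F xs \<bullet> (x - xs) \<ge> \<alpha> * (dist_set x (SOL X F)) powr M)"

definition L_smooth_on :: "('a::euclidean_space) set \<Rightarrow> ('a \<Rightarrow> real) \<Rightarrow> ('a \<Rightarrow> 'a) \<Rightarrow> real \<Rightarrow> bool" where
  "L_smooth_on X f grad L \<longleftrightarrow>
     (\<forall>x\<in>X. (f has_derivative (\<lambda>h. grad x \<bullet> h)) (at x within X)) \<and>
     (\<forall>x\<in>X. \<forall>y\<in>X. norm (grad x - grad y) \<le> L * norm (x - y))"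

definition Cf :: "('a::euclidean_space) set \<Rightarrow> ('a \<Rightarrow> 'a) \<Rightarrow> real" where
  "Cf X grad = (SUP x\<in>X. norm (grad x))"

definition residual :: "('a::euclidean_space) set \<Rightarrow> ('a \<Rightarrow> 'a) \<Rightarrow> ('a \<Rightarrow> 'a) \<Rightarrow> real \<Rightarrow> 'a \<Rightarrow> 'a" where
  "residual X F grad ghat x = (1 / ghat) *\<^sub>R (x - proj (SOL X F) (x - ghat *\<^sub>R grad x))"

text \<open>The IPR-EG iteration. xhat k = outer iterates; x k t, y k t, ybar k t inner iterates;
  Gam k t, th k t the averaging weights; eta k regularization; T k inner counts.\<close>
definition ipr_eg ::
  "('a::euclidean_space) set \<Rightarrow> ('a \<Rightarrow> 'a) \<Rightarrow> ('a \<Rightarrow> 'a) \<Rightarrow> real \<Rightarrow> real \<Rightarrow> (nat \<Rightarrow> real) \<Rightarrow> (nat \<Rightarrow> nat)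
   \<Rightarrow> (nat \<Rightarrow> 'a) \<Rightarrow> (nat \<Rightarrow> nat \<Rightarrow> 'a) \<Rightarrow> (nat \<Rightarrow> nat \<Rightarrow> 'a) \<Rightarrow> (nat \<Rightarrow> nat \<Rightarrow> 'a)
   \<Rightarrow> (nat \<Rightarrow> nat \<Rightarrow> real) \<Rightarrow> (nat \<Rightarrow> nat \<Rightarrow> real) \<Rightarrow> bool" where
  "ipr_eg X F grad ghat \<gamma> \<eta> T xhat x y ybar Gam th \<longleftrightarrow>
     xhat 0 \<in> X \<and> x 0 0 \<in> X \<and> ybar 0 0 \<in> X \<and>
     (\<forall>k. let z = xhat k - ghat *\<^sub>R grad (xhat k) in
        Gam k 0 = 0 \<and>
        th k 0 = 1 / (1 - 0.5 * \<gamma> * \<eta> k) \<and>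
        (\<forall>t. th k (Suc t) = th k t / (1 - 0.5 * \<gamma> * \<eta> k)) \<and>
        (\<forall>t. Gam k (Suc t) = Gam k t + th k t) \<and>
        (\<forall>t < T k.
           y k (Suc t) = proj X (x k t - \<gamma> *\<^sub>R (F (x k t) + \<eta> k *\<^sub>R (x k t - z))) \<and>
           x k (Suc t) = proj X (x k t - \<gamma> *\<^sub>R (F (y k (Suc t)) + \<eta> k *\<^sub>R (y k (Suc t) - z))) \<and>
           ybar k (Suc t) = (1 / Gam k (Suc t)) *\<^sub>R (Gam k t *\<^sub>R ybar k t + th k t *\<^sub>R y k (Suc t))) \<and>
        xhat (Suc k) = ybar k (T k) \<and>
        x (Suc k) 0 = ybar k (T k) \<and>
        ybar (Suc k) 0 = ybar k (T k))"

end

theory Submission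
  imports Defs
begin


lemma descent:
  fixes X :: "'a::euclidean_space set"
  assumes cv: "convex X" and sm: "L_smooth_on X f grad L" and x: "x \<in> X" and y: "y \<in> X"
  shows "f y \<le> f x + grad x \<bullet> (y - x) + L / 2 * (norm (y - x))\<^sup>2"
proof -
  define p where "p = (\<lambda>t::real. x + t *\<^sub>R (y - x))"
  have pX: "p t \<in> X" if "t \<in> {0..1}" for t
  proof -
    have "p t = (1 - t) *\<^sub>R x + t *\<^sub>R y" by (simp add: p_def algebra_simps)
    thus ?thesis using cv x y that convexD_alt by fastforce
  qed
  define h where "h = (\<lambda>t. f (p t) - t * (grad x \<bullet> (y - x)) - L / 2 * t\<^sup>2 * (norm (y - x))\<^sup>2)"
  have dp: "(p has_derivative (\<lambda>s. s *\<^sub>R (y - x))) (at t within {0..1})" for t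
    unfolding p_def by (auto intro!: derivative_eq_intros)
  have df: "(f has_derivative (\<lambda>h. grad (p t) \<bullet> h)) (at (p t) within p ` {0..1})" if "t \<in> {0..1}" for t
    using sm pX that unfolding L_smooth_on_def
    by (meson has_derivative_subset image_subsetI)
  have dh: "(h has_derivative (\<lambda>s. s * (grad (p t) \<bullet> (y - x) - grad x \<bullet> (y - x) - L * t * (norm (y - x))\<^sup>2))) (at t within {0..1})"
    if "0 \<le> t" "t \<le> 1" for t
  proof -
    have c: "((\<lambda>t. f (p t)) has_derivative (\<lambda>s. grad (p t) \<bullet> (s *\<^sub>R (y - x)))) (at t within {0..1})"
      using has_derivative_in_compose[OF dp df] that by auto
    have d1: "((\<lambda>t. t * (grad x \<bullet> (y - x))) has_derivative (\<lambda>s. s * (grad x \<bullet> (y - x)))) (at t within {0..1})"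
      by (auto intro!: derivative_eq_intros)
    have d2: "((\<lambda>t. L / 2 * t\<^sup>2 * (norm (y - x))\<^sup>2) has_derivative (\<lambda>s. s * (L * t * (norm (y - x))\<^sup>2))) (at t within {0..1})"
      apply (rule has_derivative_eq_rhs)
       apply (rule derivative_eq_intros refl)+
      apply (auto simp: fun_eq_iff algebra_simps)
      done
    show ?thesis unfolding h_def
      apply (rule has_derivative_eq_rhs)
       apply (rule has_derivative_diff[OF has_derivative_diff[OF c d1] d2])
      apply (auto simp: algebra_simps fun_eq_iff)
      done
  qed
  obtain t where t: "t \<in> {0<..<1}" and ht: "h 1 - h 0 = 1 * (grad (p t) \<bullet> (y - x) - grad x \<bullet> (y - x) - L * t * (norm (y - x))\<^sup>2)"
    using mvt_simple[of 0 1 h, OF _ dh] by auto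
  have "grad (p t) \<bullet> (y - x) - grad x \<bullet> (y - x) = (grad (p t) - grad x) \<bullet> (y - x)" by (simp add: inner_diff_left)
  also have "\<dots> \<le> norm (grad (p t) - grad x) * norm (y - x)" by (rule norm_cauchy_schwarz)
  also have "\<dots> \<le> L * norm (p t - x) * norm (y - x)"
    using sm pX[of t] t x unfolding L_smooth_on_def by (auto intro!: mult_right_mono)
  also have "\<dots> = L * t * (norm (y - x))\<^sup>2" using t by (simp add: p_def power2_eq_square)
  finally have "h 1 \<le> h 0" using ht by simp
  thus ?thesis by (simp add: h_def p_def)
qed


lemma small_lemma:
  fixes c K :: real
  assumes "K \<ge> 0" and h: "\<And>t. 0 < t \<Longrightarrow> t \<le> 1 \<Longrightarrow> c \<ge> - K * t"
  shows "c \<ge> 0"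
proof (rule ccontr)
  assume "\<not> c \<ge> 0"
  define t where "t = min 1 (- c / (2 * (K + 1)))"
  have t0: "0 < t" "t \<le> 1" using \<open>\<not> c \<ge> 0\<close> assms(1) by (auto simp: t_def intro!: divide_neg_pos)
  have "t \<le> - c / (2 * (K + 1))" by (simp add: t_def)
  hence "K * t \<le> K * (- c / (2 * (K + 1)))" using assms(1) by (metis mult_left_mono)
  also have "\<dots> < - c" using \<open>\<not> c \<ge> 0\<close> assms(1) mult_nonneg_nonpos[of K c] by (simp add: field_simps)
  finally show False using h[OF t0] by linarith
qed

lemma SOL_eq:
  fixes X :: "'a::euclidean_space set"
  assumes cv: "convex X" and lip: "LF-lipschitz_on X F" and mon: "monotone_op_on X F"
  shows "SOL X F = X \<inter> (\<Inter>y\<in>X. {x. F y \<bullet> (y - x) \<ge> 0})"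
proof
  show "SOL X F \<subseteq> X \<inter> (\<Inter>y\<in>X. {x. F y \<bullet> (y - x) \<ge> 0})"
  proof
    fix x assume x: "x \<in> SOL X F"
    have xX: "x \<in> X" using x by (auto simp: SOL_def)
    have "F y \<bullet> (y - x) \<ge> 0" if y: "y \<in> X" for y
    proof -
      have "F x \<bullet> (y - x) \<ge> 0" using x y by (auto simp: SOL_def)
      moreover have "(F y - F x) \<bullet> (y - x) \<ge> 0" using mon xX y by (auto simp: monotone_op_on_def)
      ultimately show ?thesis by (auto simp: inner_diff_left)
    qed
    thus "x \<in> X \<inter> (\<Inter>y\<in>X. {x. F y \<bullet> (y - x) \<ge> 0})" using xX by auto
  qed
next
  show "X \<inter> (\<Inter>y\<in>X. {x. F y \<bullet> (y - x) \<ge> 0}) \<subseteq> SOL X F"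
  proof (clarsimp simp: SOL_def)
    fix x w assume xX: "x \<in> X" and h: "\<forall>y\<in>X. F y \<bullet> (y - x) \<ge> 0" and w: "w \<in> X"
    have LF0: "LF \<ge> 0" using lip by (simp add: lipschitz_on_def)
    show "F x \<bullet> (w - x) \<ge> 0"
    proof (rule small_lemma[of "LF * (norm (w - x))\<^sup>2"])
      show "LF * (norm (w - x))\<^sup>2 \<ge> 0" using LF0 by simp
      fix t :: real assume t: "0 < t" "t \<le> 1"
      define yt where "yt = x + t *\<^sub>R (w - x)"
      have "yt = (1 - t) *\<^sub>R x + t *\<^sub>R w" by (simp add: yt_def algebra_simps)
      hence ytX: "yt \<in> X" using cv xX w t convexD_alt by fastforce
      have "F yt \<bullet> (yt - x) \<ge> 0" using h ytX by blast
      moreover have "yt - x = t *\<^sub>R (w - x)" by (simp add: yt_def)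
      ultimately have "F yt \<bullet> (t *\<^sub>R (w - x)) \<ge> 0" by simp
      hence a: "F yt \<bullet> (w - x) \<ge> 0" using t by (simp add: zero_le_mult_iff)
      have "(F yt - F x) \<bullet> (w - x) \<le> norm (F yt - F x) * norm (w - x)" by (rule norm_cauchy_schwarz)
      also have "\<dots> \<le> LF * norm (yt - x) * norm (w - x)"
        using lip ytX xX by (auto simp: lipschitz_on_def dist_norm intro!: mult_right_mono)
      also have "\<dots> = LF * (norm (w - x))\<^sup>2 * t" using t by (simp add: yt_def power2_eq_square)
      finally have "(F yt - F x) \<bullet> (w - x) \<le> LF * (norm (w - x))\<^sup>2 * t" .
      with a show "F x \<bullet> (w - x) \<ge> - (LF * (norm (w - x))\<^sup>2) * t" by (simp add: inner_diff_left)
    qed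
  qed
qed

lemma SOL_closed_convex:
  fixes X :: "'a::euclidean_space set"
  assumes cl: "closed X" and cv: "convex X" and lip: "LF-lipschitz_on X F" and mon: "monotone_op_on X F"
  shows "closed (SOL X F)" "convex (SOL X F)"
proof -
  have hs: "{x. F y \<bullet> (y - x) \<ge> 0} = {x. F y \<bullet> x \<le> F y \<bullet> y}" for y
    by (auto simp: inner_diff_right)
  show "closed (SOL X F)" unfolding SOL_eq[OF cv lip mon] hs
    by (intro closed_Int cl closed_INT ballI closed_halfspace_le)
  show "convex (SOL X F)" unfolding SOL_eq[OF cv lip mon] hs
    by (intro convex_Int cv convex_INT ballI convex_halfspace_le)
qed

lemma proj_ineq:
  fixes S :: "'a::euclidean_space set"
  assumes "closed S" "convex S"
  shows "(z - closest_point S z) \<bullet> (closest_point S x - closest_point S z) \<le> 0"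
proof (cases "S = {}")
  case True thus ?thesis by (simp add: closest_point_def)
next
  case False
  thus ?thesis using closest_point_dot[OF assms(2,1) closest_point_in_set[OF assms(1) False]] by simp
qed

lemma ipr_facts:
  assumes ip: "ipr_eg X F grad ghat \<gamma> \<eta> T xhat x y ybar Gam th"
  shows "xhat 0 \<in> X" "ybar 0 0 \<in> X"
    "Gam k 0 = 0" "th k 0 = 1 / (1 - 0.5 * \<gamma> * \<eta> k)"
    "th k (Suc t) = th k t / (1 - 0.5 * \<gamma> * \<eta> k)"
    "Gam k (Suc t) = Gam k t + th k t"
    "t < T k \<Longrightarrow> y k (Suc t) = proj X (x k t - \<gamma> *\<^sub>R (F (x k t) + \<eta> k *\<^sub>R (x k t - (xhat k - ghat *\<^sub>R grad (xhat k)))))"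
    "t < T k \<Longrightarrow> ybar k (Suc t) = (1 / Gam k (Suc t)) *\<^sub>R (Gam k t *\<^sub>R ybar k t + th k t *\<^sub>R y k (Suc t))"
    "xhat (Suc k) = ybar k (T k)" "ybar (Suc k) 0 = ybar k (T k)"
proof -
  have A: "xhat 0 \<in> X \<and> x 0 0 \<in> X \<and> ybar 0 0 \<in> X" using ip unfolding ipr_eg_def by (elim conjE) simp
  have B: "\<forall>k. let z = xhat k - ghat *\<^sub>R grad (xhat k) in
        Gam k 0 = 0 \<and>
        th k 0 = 1 / (1 - 0.5 * \<gamma> * \<eta> k) \<and>
        (\<forall>t. th k (Suc t) = th k t / (1 - 0.5 * \<gamma> * \<eta> k)) \<and>
        (\<forall>t. Gam k (Suc t) = Gam k t + th k t) \<and>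
        (\<forall>t < T k.
           y k (Suc t) = proj X (x k t - \<gamma> *\<^sub>R (F (x k t) + \<eta> k *\<^sub>R (x k t - z))) \<and>
           x k (Suc t) = proj X (x k t - \<gamma> *\<^sub>R (F (y k (Suc t)) + \<eta> k *\<^sub>R (y k (Suc t) - z))) \<and>
           ybar k (Suc t) = (1 / Gam k (Suc t)) *\<^sub>R (Gam k t *\<^sub>R ybar k t + th k t *\<^sub>R y k (Suc t))) \<and>
        xhat (Suc k) = ybar k (T k) \<and>
        x (Suc k) 0 = ybar k (T k) \<and>
        ybar (Suc k) 0 = ybar k (T k)" using ip unfolding ipr_eg_def by (elim conjE)
  note Bk = B[rule_format, of k, unfolded Let_def]
  show "xhat 0 \<in> X" "ybar 0 0 \<in> X" using A by auto
  show "Gam k 0 = 0" "th k 0 = 1 / (1 - 0.5 * \<gamma> * \<eta> k)"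
    "th k (Suc t) = th k t / (1 - 0.5 * \<gamma> * \<eta> k)"
    "Gam k (Suc t) = Gam k t + th k t"
    "xhat (Suc k) = ybar k (T k)" "ybar (Suc k) 0 = ybar k (T k)" using Bk by blast+
  show "t < T k \<Longrightarrow> y k (Suc t) = proj X (x k t - \<gamma> *\<^sub>R (F (x k t) + \<eta> k *\<^sub>R (x k t - (xhat k - ghat *\<^sub>R grad (xhat k)))))"
    "t < T k \<Longrightarrow> ybar k (Suc t) = (1 / Gam k (Suc t)) *\<^sub>R (Gam k t *\<^sub>R ybar k t + th k t *\<^sub>R y k (Suc t))"
    using Bk by blast+
qed


lemma iter_in_X:
  fixes X :: "'a::euclidean_space set"
  assumes ne: "X \<noteq> {}" and cl: "closed X" and cv: "convex X"
    and g: "\<And>k. \<gamma> * \<eta> k < 2"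
    and ip: "ipr_eg X F grad ghat \<gamma> \<eta> T xhat x y ybar Gam th"
  shows "xhat k \<in> X \<and> ybar k 0 \<in> X"
proof -
  note F = ipr_facts[OF ip]
  have th: "th k t > 0" for k t
  proof (induction t)
    case 0 have "1 - 0.5 * \<gamma> * \<eta> k > 0" using g[of k] by simp
    thus ?case using F(4)[of k] by simp
  next
    case (Suc t) have "1 - 0.5 * \<gamma> * \<eta> k > 0" using g[of k] by simp
    thus ?case using Suc F(5)[of k t] by simp
  qed
  have Gm: "Gam k t \<ge> 0" for k t
  proof (induction t)
    case 0 thus ?case using F(3)[of k] by simp
  next
    case (Suc t) thus ?case using th[of k t] F(6)[of k t] by simp
  qed
  have inner: "ybar k t \<in> X" if "ybar k 0 \<in> X" "t \<le> T k" for k t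
    using that(2)
  proof (induction t)
    case 0 thus ?case using that(1) by simp
  next
    case (Suc t)
    have tT: "t < T k" using Suc by simp
    have yX: "y k (Suc t) \<in> X" using F(7)[OF tT] closest_point_in_set[OF cl ne] by simp
    have bX: "ybar k t \<in> X" using Suc by simp
    have eq: "ybar k (Suc t) = (1 / (Gam k t + th k t)) *\<^sub>R (Gam k t *\<^sub>R ybar k t + th k t *\<^sub>R y k (Suc t))"
      using F(8)[OF tT] F(6)[of k t] by simp
    define a where "a = Gam k t / (Gam k t + th k t)"
    have pos: "Gam k t + th k t > 0" using Gm[of k t] th[of k t] by simp
    have a01: "0 \<le> a" "a \<le> 1" using Gm[of k t] th[of k t] pos by (auto simp: a_def field_simps)
    have "ybar k (Suc t) = a *\<^sub>R ybar k t + (1 - a) *\<^sub>R y k (Suc t)"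
    proof -
      have "1 - a = th k t / (Gam k t + th k t)" using pos by (simp add: a_def field_simps)
      thus ?thesis unfolding eq a_def by (simp add: scaleR_add_right)
    qed
    thus ?case using convexD_alt[OF cv yX bX a01] by (simp add: add.commute)
  qed
  show ?thesis
  proof (induction k)
    case 0 thus ?case using F(1,2) by auto
  next
    case (Suc k)
    have "ybar k (T k) \<in> X" using inner Suc by simp
    thus ?case using F(9,10)[of k] by simp
  qed
qed

lemma grad_bound:
  fixes X :: "'a::euclidean_space set"
  assumes "compact X" and sm: "L_smooth_on X f grad L" and "L > 0" and x: "x \<in> X"
  shows "norm (grad x) \<le> Cf X grad"
proof -
  have "L-lipschitz_on X grad" using sm \<open>L > 0\<close> unfolding L_smooth_on_def
    by (intro lipschitz_onI) (auto simp: dist_norm)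
  hence "continuous_on X grad" by (rule lipschitz_on_continuous_on)
  hence "bounded (grad ` X)" using assms(1) compact_continuous_image compact_imp_bounded by blast
  then obtain B where "\<forall>v\<in>grad ` X. norm v \<le> B" unfolding bounded_iff by blast
  hence "bdd_above ((\<lambda>x. norm (grad x)) ` X)" by (auto intro!: bdd_aboveI)
  thus ?thesis unfolding Cf_def using x by (rule cSUP_upper2) simp
qed

lemma final_arith:
  fixes uu dd ee ue gu gd ge nu nd ne C D g L :: real
  assumes "uu = nu\<^sup>2" "dd = nd\<^sup>2" "ee = ne\<^sup>2" "nu \<ge> 0" "nd \<ge> 0" "ne \<ge> 0" "C \<ge> 0"
    and ue: "ue \<le> nu * ne" and gd: "gd \<le> C * nd" and ge: "ge \<ge> - (C * ne)"
    and B: "uu - ue - g * gu + g * ge \<le> 0"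
    and D: "D \<ge> - gd + gu - L * dd - L * uu"
    and g: "0 < g" and L: "0 < L" and gL: "g \<le> 1 / (2 * L)"
  shows "uu / g\<^sup>2 \<le> 4 / g * D + L * g * C\<^sup>2 + 80 / (L * g ^ 3) * (dd + ee)"
proof -
  define A where "A = g\<^sup>2 * L"
  have A0: "A > 0" using g L by (simp add: A_def)
  have q: "L * g \<le> 1/2" using gL g L by (simp add: field_simps)
  have am1: "nu * ne \<le> uu / 8 + 2 * ee"
  proof -
    have "0 \<le> (nu - 4 * ne)\<^sup>2" by simp
    thus ?thesis using assms(1,3) by (simp add: power2_eq_square algebra_simps)
  qed
  have am2: "C * n \<le> A * C\<^sup>2 / 8 + 2 * n\<^sup>2 / A" for n
  proof -
    have "0 \<le> (A * C - 4 * n)\<^sup>2" by simp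
    hence "8 * A * C * n \<le> A\<^sup>2 * C\<^sup>2 + 16 * n\<^sup>2" by (simp add: power2_eq_square algebra_simps)
    thus ?thesis using A0 by (simp add: field_simps power2_eq_square)
  qed
  have gu: "gu \<ge> (uu - ue) / g + ge" using B g by (simp add: field_simps)
  have Lu: "L * uu \<le> uu / (2 * g)"
  proof -
    have "L * uu * (2 * g) \<le> uu" using q assms(1) mult_right_mono[OF q, of uu] by (simp add: algebra_simps)
    thus ?thesis using g by (simp add: field_simps)
  qed
  have e1: "2 * ee / g \<le> ee / A"
  proof -
    have "2 * ee * A \<le> ee * g" using q assms(3) mult_left_mono[OF q, of "2 * ee * g"] g
      by (simp add: A_def power2_eq_square algebra_simps)
    thus ?thesis using g A0 by (simp add: field_simps)
  qed
  have d1: "L * dd \<le> dd / A"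
  proof -
    have "L * g * (L * g) \<le> 1/2 * (1/2)" using q L g by (intro mult_mono) auto
    hence "L * g * (L * g) \<le> 1" by simp
    hence "L * dd * A \<le> dd" using assms(2) mult_right_mono[of "L * g * (L * g)" 1 dd]
      by (simp add: A_def power2_eq_square algebra_simps)
    thus ?thesis using A0 by (simp add: field_simps)
  qed
  have main: "D \<ge> 3 * uu / (8 * g) - A * C\<^sup>2 / 4 - 3 * (dd + ee) / A"
  proof -
    have "ue / g \<le> (uu / 8 + 2 * ee) / g" using ue am1 g by (simp add: divide_right_mono)
    moreover have "gd \<le> A * C\<^sup>2 / 8 + 2 * dd / A" using gd am2[of nd] assms(2) by simp
    moreover have "- ge \<le> A * C\<^sup>2 / 8 + 2 * ee / A" using ge am2[of ne] assms(3) by simp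
    moreover have "(uu / 8 + 2 * ee) / g = uu / (8 * g) + 2 * ee / g" using g by (simp add: field_simps)
    moreover have "(uu - ue) / g = uu / g - ue / g" by (simp add: diff_divide_distrib)
    moreover have "uu / g - uu / (8 * g) - uu / (2 * g) = 3 * uu / (8 * g)" by (simp add: field_simps)
    moreover have "3 * (dd + ee) / A = dd / A + ee / A + 2 * dd / A + 2 * ee / A" by (simp add: add_divide_distrib)
    ultimately show ?thesis using D gu Lu e1 d1 by linarith
  qed
  have "uu / (4 * g) \<le> D + A * C\<^sup>2 / 4 + 20 * (dd + ee) / A"
  proof -
    have "uu / (4 * g) \<le> 3 * uu / (8 * g)" using g assms(1) by (simp add: field_simps)
    moreover have "3 * (dd + ee) / A \<le> 20 * (dd + ee) / A" using A0 assms(2,3) by (simp add: divide_right_mono)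
    ultimately show ?thesis using main by linarith
  qed
  hence le: "4 / g * (uu / (4 * g)) \<le> 4 / g * (D + A * C\<^sup>2 / 4 + 20 * (dd + ee) / A)"
    using g by (intro mult_left_mono) auto
  have "uu / g\<^sup>2 = 4 / g * (uu / (4 * g))" using g by (simp add: field_simps power2_eq_square)
  also have "\<dots> \<le> 4 / g * (D + A * C\<^sup>2 / 4 + 20 * (dd + ee) / A)" by (rule le)
  also have "\<dots> = 4 / g * D + L * g * C\<^sup>2 + 80 / (L * g ^ 3) * (dd + ee)"
    using g L by (simp add: A_def field_simps power2_eq_square power3_eq_cube)
  finally show ?thesis .
qed

theorem proposition5p6:
  fixes X :: "(real ^ 'n) set" and F grad :: "real ^ 'n \<Rightarrow> real ^ 'n" and f :: "real ^ 'n \<Rightarrow> real"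
    and LF L \<alpha> M ghat \<gamma> :: real and \<eta> :: "nat \<Rightarrow> real" and T :: "nat \<Rightarrow> nat"
    and xhat :: "nat \<Rightarrow> real ^ 'n" and x y ybar :: "nat \<Rightarrow> nat \<Rightarrow> real ^ 'n"
    and Gam th :: "nat \<Rightarrow> nat \<Rightarrow> real"
  assumes "X \<noteq> {}" and "compact X" and "convex X"
    and "LF-lipschitz_on X F" and "monotone_op_on X F"
    and "L > 0" and "L_smooth_on X f grad L"
    and "M \<ge> 1" and "weakly_sharp X F \<alpha> M"
    and "ghat > 0" and "ghat \<le> 1 / (2 * L)"
    and "\<gamma> > 0" and "\<And>k. \<eta> k > 0" and "\<And>k. \<gamma> * \<eta> k < 2"
    and "ipr_eg X F grad ghat \<gamma> \<eta> T xhat x y ybar Gam th"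
  shows "\<forall>k. (norm (residual X F grad ghat (xhat k)))\<^sup>2
    \<le> 4 / ghat * (f (xhat k) - f (xhat (Suc k))) + L * ghat * (Cf X grad)\<^sup>2
       + 80 / (L * ghat ^ 3) *
         ((norm (xhat (Suc k) - proj (SOL X F) (xhat k - ghat *\<^sub>R grad (xhat k))))\<^sup>2
          + (norm (xhat k - proj (SOL X F) (xhat k)))\<^sup>2)"
  proof
  fix k
  have clX: "closed X" using assms(2) compact_imp_closed by blast
  note SC = SOL_closed_convex[OF clX assms(3) assms(4) assms(5)]
  have xin: "xhat j \<in> X" for j using iter_in_X[OF assms(1) clX assms(3) assms(14) assms(15)] by blast
  define xk where "xk = xhat k"
  define xp where "xp = xhat (Suc k)"
  define gk where "gk = grad xk"
  define z where "z = xk - ghat *\<^sub>R gk"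
  define p where "p = proj (SOL X F) z"
  define xs where "xs = proj (SOL X F) xk"
  define u where "u = xk - p"
  define d where "d = xp - p"
  define e where "e = xk - xs"
  have xkX: "xk \<in> X" and xpX: "xp \<in> X" using xin by (auto simp: xk_def xp_def)
  have Bv: "(z - p) \<bullet> (xs - p) \<le> 0" unfolding p_def xs_def by (rule proj_ineq[OF SC])
  have "z - p = u - ghat *\<^sub>R gk" "xs - p = u - e" by (auto simp: z_def u_def e_def)
  with Bv have B: "u \<bullet> u - u \<bullet> e - ghat * (gk \<bullet> u) + ghat * (gk \<bullet> e) \<le> 0"
    by (simp add: inner_diff_left inner_diff_right inner_commute algebra_simps)
  have Av: "f xp \<le> f xk + gk \<bullet> (xp - xk) + L / 2 * (norm (xp - xk))\<^sup>2"
    unfolding gk_def by (rule descent[OF assms(3) assms(7) xkX xpX])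
  have "xp - xk = d - u" by (simp add: d_def u_def)
  hence "gk \<bullet> (xp - xk) = gk \<bullet> d - gk \<bullet> u" by (simp add: inner_diff_right)
  moreover have "(norm (xp - xk))\<^sup>2 \<le> 2 * (u \<bullet> u) + 2 * (d \<bullet> d)"
  proof -
    have "(norm (d - u))\<^sup>2 + (norm (d + u))\<^sup>2 = 2 * (u \<bullet> u) + 2 * (d \<bullet> d)"
      by (simp add: power2_norm_eq_inner inner_diff_left inner_diff_right inner_add_left inner_add_right inner_commute)
    moreover have "(norm (d + u))\<^sup>2 \<ge> 0" by simp
    ultimately show ?thesis unfolding \<open>xp - xk = d - u\<close> by linarith
  qed
  moreover have "L / 2 * (norm (xp - xk))\<^sup>2 \<le> L / 2 * (2 * (u \<bullet> u) + 2 * (d \<bullet> d))"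
    using calculation(2) assms(6) by (intro mult_left_mono) auto
  ultimately have D: "f xk - f xp \<ge> - (gk \<bullet> d) + gk \<bullet> u - L * (d \<bullet> d) - L * (u \<bullet> u)"
    using Av by (simp add: algebra_simps)
  have C: "norm gk \<le> Cf X grad" unfolding gk_def by (rule grad_bound[OF assms(2) assms(7) assms(6) xkX])
  have C0: "Cf X grad \<ge> 0" using C norm_ge_zero order_trans by blast
  have ue: "u \<bullet> e \<le> norm u * norm e" by (rule norm_cauchy_schwarz)
  have gd: "gk \<bullet> d \<le> Cf X grad * norm d"
  proof -
    have "gk \<bullet> d \<le> norm gk * norm d" using norm_cauchy_schwarz[of gk d] by simp
    moreover have "norm gk * norm d \<le> Cf X grad * norm d" using C by (intro mult_right_mono) auto
    ultimately show ?thesis by linarith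
  qed
  have ge: "gk \<bullet> e \<ge> - (Cf X grad * norm e)"
  proof -
    have "- (gk \<bullet> e) \<le> norm gk * norm e" using norm_cauchy_schwarz[of "-gk" e] by simp
    moreover have "norm gk * norm e \<le> Cf X grad * norm e" using C by (intro mult_right_mono) auto
    ultimately show ?thesis by linarith
  qed
  have res: "(norm (residual X F grad ghat (xhat k)))\<^sup>2 = (u \<bullet> u) / ghat\<^sup>2"
  proof -
    have "residual X F grad ghat (xhat k) = (1 / ghat) *\<^sub>R u"
      by (simp add: residual_def u_def p_def z_def xk_def gk_def)
    thus ?thesis using assms(10) by (simp add: power_mult_distrib power2_norm_eq_inner[symmetric] power_divide)
  qed
  have fin: "(u \<bullet> u) / ghat\<^sup>2 \<le> 4 / ghat * (f xk - f xp) + L * ghat * (Cf X grad)\<^sup>2 + 80 / (L * ghat ^ 3) * (d \<bullet> d + e \<bullet> e)"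
    by (rule final_arith[where nu="norm u" and nd="norm d" and ne="norm e", OF _ _ _ _ _ _ C0 ue gd ge B D assms(10) assms(6) assms(11)])
       (simp_all add: power2_norm_eq_inner)
  show "(norm (residual X F grad ghat (xhat k)))\<^sup>2
    \<le> 4 / ghat * (f (xhat k) - f (xhat (Suc k))) + L * ghat * (Cf X grad)\<^sup>2
       + 80 / (L * ghat ^ 3) *
         ((norm (xhat (Suc k) - proj (SOL X F) (xhat k - ghat *\<^sub>R grad (xhat k))))\<^sup>2
          + (norm (xhat k - proj (SOL X F) (xhat k)))\<^sup>2)"
    using fin unfolding res
    by (simp add: xk_def xp_def d_def e_def p_def z_def xs_def gk_def power2_norm_eq_inner)
qed

end
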